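(* Let $\epsilon>0$, $n\ge1$, $s=\sqrt{e^\epsilon}$, and let $\mathbf{w}\in\mathbb{R}^d$ be non-increasing. For parameters $\mathbf{m}$ (with $m_j\ge0$, $\sum_jm_j=1$) and $c\in\mathbb{R}$, let $\mathrm{err}_{\mathrm{MSE}}(\mathbf{m},c)=\mathbb{E}[|\tilde\theta-\theta|_2^2]$, where $n$ voters with scored votes $v^{(1)},\dots,v^{(n)}$ independently apply the weighted sampling mechanism with parameters $(\epsilon,\mathbf{w},\mathbf{m},c)$ to get $\tilde v^{(i)}$, $\theta=\frac1n\sum_iv^{(i)}$, $\tilde\theta=\frac1n\sum_i\tilde v^{(i)}$. Then $$\min_{\mathbf{m},c}\mathrm{err}_{\mathrm{MSE}}(\mathbf{m},c)\le\frac1n\Big(1+\frac{ds}{(s-1)^2}\Big)\Big(\sum_{j=1}^d|w_j-w_{\lceil d/2\rceil}|\Big)^2.$$ Moreover, if $\mathbf{w}$ is not constant, this upper bound holds for the choice $c^*=w_{\lceil d/2\rceil}$ and $m^*_j=\frac{|w_j-c^*|}{\sum_{i=1}^d|w_i-c^*|}$.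
   Context: Candidates are $A_1,\dots,A_d$; a vote $\pi$ is a linear ordering, $\pi_j$ the index of the candidate at rank $j$; the scored vote is $v$ with $v_{\pi_j}=w_j$. The weighted sampling mechanism with parameters $(\epsilon,\mathbf{w},\mathbf{m},c)$, on input $\pi$: (1) samples a rank $j^*$ with $\Pr[j^*=j]=m_j$, independently of $\pi$; (2) sets $B\in\{0,1\}^d$ with $B_{\pi_{j^*}}=1$, other entries $0$; (3) independently for each $k$, sets $\tilde B_k=1-B_k$ with probability $\frac1{s+1}$, else $\tilde B_k=B_k$; (4) outputs $\tilde v_k=\frac{(s+1)\tilde B_k-1}{s-1}\cdot\frac{w_{j^*}-c}{m_{j^*}}+c$. *)

theory Defs
  imports "HOL-Probability.Probability" "HOL-Combinatorics.Permutations"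
begin

text \<open>Candidates and ranks are indexed by 1..d.  A vote pi is a permutation of {1..d}
  with pi j = index of the candidate at rank j.  Weights w and sampling
  probabilities m are functions nat => real, only their values on 1..d matter.\<close>

definition scored_vote :: "(nat \<Rightarrow> real) \<Rightarrow> (nat \<Rightarrow> nat) \<Rightarrow> nat \<Rightarrow> real" where
  "scored_vote w \<pi> k = w (inv \<pi> k)"

definition prob_vec :: "nat \<Rightarrow> (nat \<Rightarrow> real) \<Rightarrow> bool" where
  "prob_vec d m \<longleftrightarrow> (\<forall>j\<in>{1..d}. 0 \<le> m j) \<and> (\<Sum>j=1..d. m j) = 1"

text \<open>Distribution of the sampled rank: Pr[j* = j] = m j (meaningful when prob_vec d m).\<close>
definition rank_pmf :: "nat \<Rightarrow> (nat \<Rightarrow> real) \<Rightarrow> nat pmf" where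
  "rank_pmf d m = embed_pmf (\<lambda>j. if j \<in> {1..d} then m j else 0)"

definition wsm_s :: "real \<Rightarrow> real" where
  "wsm_s \<epsilon> = sqrt (exp \<epsilon>)"

definition wsm :: "real \<Rightarrow> (nat \<Rightarrow> real) \<Rightarrow> (nat \<Rightarrow> real) \<Rightarrow> real \<Rightarrow> nat \<Rightarrow> (nat \<Rightarrow> nat)
                     \<Rightarrow> (nat \<Rightarrow> real) pmf" where
  "wsm \<epsilon> w m c d \<pi> =
     do { j \<leftarrow> rank_pmf d m;
          F \<leftarrow> Pi_pmf {1..d} False (\<lambda>_. bernoulli_pmf (1 / (wsm_s \<epsilon> + 1)));
          return_pmf (\<lambda>k. if k \<in> {1..d} then
             (let B = (k = \<pi> j); Bt = (B \<noteq> F k) in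
               ((wsm_s \<epsilon> + 1) * of_bool Bt - 1) / (wsm_s \<epsilon> - 1) * ((w j - c) / m j) + c)
             else 0) }"

definition err_MSE :: "real \<Rightarrow> (nat \<Rightarrow> real) \<Rightarrow> nat \<Rightarrow> nat \<Rightarrow> (nat \<Rightarrow> nat \<Rightarrow> nat)
                         \<Rightarrow> (nat \<Rightarrow> real) \<Rightarrow> real \<Rightarrow> real" where
  "err_MSE \<epsilon> w d n P m c =
     measure_pmf.expectation (Pi_pmf {1..n} (\<lambda>_. 0) (\<lambda>i. wsm \<epsilon> w m c d (P i)))
       (\<lambda>V. \<Sum>k=1..d. ((1 / real n) * (\<Sum>i=1..n. V i k)
                        - (1 / real n) * (\<Sum>i=1..n. scored_vote w (P i) k))\<^sup>2)"

end

theory Submission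
  imports Defs
begin

lemma pmf_rank:
  assumes "prob_vec d m"
  shows "pmf (rank_pmf d m) j = (if j \<in> {1..d} then m j else 0)"
proof -
  have nn: "\<And>x. 0 \<le> (if x \<in> {1..d} then m x else 0)" using assms by (auto simp: prob_vec_def)
  have "(\<integral>\<^sup>+x. ennreal (if x \<in> {1..d} then m x else 0) \<partial>count_space UNIV)
        = (\<Sum>x\<in>{1..d}. ennreal (if x \<in> {1..d} then m x else 0))"
    by (rule nn_integral_count_space') auto
  also have "\<dots> = ennreal (\<Sum>x\<in>{1..d}. (if x \<in> {1..d} then m x else 0))"
    by (rule sum_ennreal) (use nn in blast)
  also have "\<dots> = 1" using assms by (simp add: prob_vec_def)
  finally show ?thesis unfolding rank_pmf_def using nn by (subst pmf_embed_pmf) auto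
qed

lemma set_rank: "prob_vec d m \<Longrightarrow> set_pmf (rank_pmf d m) \<subseteq> {1..d}"
  by (auto simp: set_pmf_eq pmf_rank split: if_splits)

lemma finite_Pi_set:
  assumes "finite I" "\<And>i. i \<in> I \<Longrightarrow> finite (set_pmf (p i))"
  shows "finite (set_pmf (Pi_pmf I dflt p))"
  using assms by (subst set_Pi_pmf) auto

lemma finite_wsm:
  assumes "prob_vec d m"
  shows "finite (set_pmf (wsm \<epsilon> w m c d \<pi>))"
proof -
  have "finite (set_pmf (Pi_pmf {1..d} False (\<lambda>_. bernoulli_pmf (1 / (wsm_s \<epsilon> + 1)))))"
    by (rule finite_Pi_set) auto
  moreover have "finite (set_pmf (rank_pmf d m))"
    using set_rank[OF assms] finite_subset by blast
  ultimately show ?thesis unfolding wsm_def by (auto simp: set_bind_pmf)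
qed

lemma pair_comp:
  assumes "finite I" "i \<in> I" "j \<in> I" "i \<noteq> j"
  shows "map_pmf (\<lambda>V. (V i, V j)) (Pi_pmf I dflt p) = pair_pmf (p i) (p j)"
proof -
  have I: "I = insert i (I - {i})" using assms by auto
  have "map_pmf (\<lambda>V. (V i, V j)) (Pi_pmf I dflt p)
      = map_pmf (\<lambda>V. (V i, V j)) (map_pmf (\<lambda>(y,f). f(i:=y)) (pair_pmf (p i) (Pi_pmf (I - {i}) dflt p)))"
    using assms by (subst I, subst Pi_pmf_insert) auto
  also have "\<dots> = map_pmf (\<lambda>(a, b). (id a, (\<lambda>f. f j) b)) (pair_pmf (p i) (Pi_pmf (I - {i}) dflt p))"
    using assms by (simp add: pmf.map_comp o_def case_prod_unfold)
  also have "\<dots> = pair_pmf (p i) (p j)"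
    using assms by (subst map_pair) (simp add: Pi_pmf_component)
  finally show ?thesis .
qed

lemma expect_fin:
  fixes f :: "'a \<Rightarrow> real"
  assumes "finite (set_pmf M)"
  shows "measure_pmf.expectation M f = (\<Sum>a\<in>set_pmf M. f a * pmf M a)"
  using assms by (rule integral_measure_pmf_real) auto

lemma pair_expect:
  fixes f g :: "'a \<Rightarrow> real"
  assumes "finite (set_pmf A)" "finite (set_pmf B)"
  shows "measure_pmf.expectation (pair_pmf A B) (\<lambda>z. f (fst z) * g (snd z))
       = measure_pmf.expectation A f * measure_pmf.expectation B g"
proof -
  have pp: "\<And>z. pmf (pair_pmf A B) z = pmf A (fst z) * pmf B (snd z)"
    by (case_tac z) (simp add: pmf_pair)
  show ?thesis using assms
  by (simp add: expect_fin sum_product sum.cartesian_product pp case_prod_unfold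
      mult_ac)
qed

lemma var_indep:
  fixes p :: "nat \<Rightarrow> 'a pmf" and f :: "nat \<Rightarrow> 'a \<Rightarrow> real"
  assumes fI: "finite I" and fin: "\<And>i. i \<in> I \<Longrightarrow> finite (set_pmf (p i))"
    and z: "\<And>i. i \<in> I \<Longrightarrow> measure_pmf.expectation (p i) (f i) = 0"
  shows "measure_pmf.expectation (Pi_pmf I dflt p) (\<lambda>V. (\<Sum>i\<in>I. f i (V i))\<^sup>2)
       = (\<Sum>i\<in>I. measure_pmf.expectation (p i) (\<lambda>x. (f i x)\<^sup>2))"
proof -
  let ?Q = "Pi_pmf I dflt p"
  have fQ: "finite (set_pmf ?Q)" by (intro finite_Pi_set fI fin)
  have int: "\<And>g::(nat \<Rightarrow> 'a) \<Rightarrow> real. integrable (measure_pmf ?Q) g" using fQ by (simp add: integrable_measure_pmf_finite)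
  have "measure_pmf.expectation ?Q (\<lambda>V. (\<Sum>i\<in>I. f i (V i))\<^sup>2)
      = measure_pmf.expectation ?Q (\<lambda>V. \<Sum>i\<in>I. \<Sum>j\<in>I. f i (V i) * f j (V j))"
    by (simp add: power2_eq_square sum_product)
  also have "\<dots> = (\<Sum>i\<in>I. \<Sum>j\<in>I. measure_pmf.expectation ?Q (\<lambda>V. f i (V i) * f j (V j)))"
    by (simp add: integral_sum int)
  also have "\<dots> = (\<Sum>i\<in>I. measure_pmf.expectation (p i) (\<lambda>x. (f i x)\<^sup>2))"
  proof (rule sum.cong[OF refl])
    fix i assume i: "i \<in> I"
    have "(\<Sum>j\<in>I. measure_pmf.expectation ?Q (\<lambda>V. f i (V i) * f j (V j)))
        = (\<Sum>j\<in>I. if j = i then measure_pmf.expectation (p i) (\<lambda>x. (f i x)\<^sup>2) else 0)"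
    proof (rule sum.cong[OF refl])
      fix j assume j: "j \<in> I"
      show "measure_pmf.expectation ?Q (\<lambda>V. f i (V i) * f j (V j))
          = (if j = i then measure_pmf.expectation (p i) (\<lambda>x. (f i x)\<^sup>2) else 0)"
      proof (cases "j = i")
        case True
        have "measure_pmf.expectation ?Q (\<lambda>V. f i (V i) * f j (V j))
            = measure_pmf.expectation (map_pmf (\<lambda>V. V i) ?Q) (\<lambda>x. (f i x)\<^sup>2)"
          using True by (simp add: power2_eq_square)
        also have "\<dots> = measure_pmf.expectation (p i) (\<lambda>x. (f i x)\<^sup>2)"
          using fI i by (simp add: Pi_pmf_component)
        finally show ?thesis using True by simp
      next
        case False
        have "measure_pmf.expectation ?Q (\<lambda>V. f i (V i) * f j (V j))
            = measure_pmf.expectation (map_pmf (\<lambda>V. (V i, V j)) ?Q) (\<lambda>z. f i (fst z) * f j (snd z))"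
          by simp
        also have "\<dots> = measure_pmf.expectation (pair_pmf (p i) (p j)) (\<lambda>z. f i (fst z) * f j (snd z))"
          by (subst pair_comp[OF fI i j]) (use False in auto)
        also have "\<dots> = 0" using pair_expect[OF fin[OF i] fin[OF j]] z[OF j] by simp
        finally show ?thesis using False by simp
      qed
    qed
    also have "\<dots> = measure_pmf.expectation (p i) (\<lambda>x. (f i x)\<^sup>2)"
      using fI i by simp
    finally show "(\<Sum>j\<in>I. measure_pmf.expectation ?Q (\<lambda>V. f i (V i) * f j (V j)))
        = measure_pmf.expectation (p i) (\<lambda>x. (f i x)\<^sup>2)" .
  qed
  finally show ?thesis .
qed

lemma wsm_s_gt1: "\<epsilon> > 0 \<Longrightarrow> wsm_s \<epsilon> > 1"
  unfolding wsm_s_def by (simp add: real_less_rsqrt)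

lemma wsm_expect:
  fixes h :: "real \<Rightarrow> real"
  assumes pv: "prob_vec d m" and k: "k \<in> {1..d}"
  shows "measure_pmf.expectation (wsm \<epsilon> w m c d \<pi>) (\<lambda>V. h (V k))
    = (\<Sum>j=1..d. m j * measure_pmf.expectation (bernoulli_pmf (1 / (wsm_s \<epsilon> + 1)))
        (\<lambda>b. h (((wsm_s \<epsilon> + 1) * of_bool ((k = \<pi> j) \<noteq> b) - 1) / (wsm_s \<epsilon> - 1) * ((w j - c) / m j) + c)))"
proof -
  let ?S = "wsm_s \<epsilon>"
  let ?Pi = "Pi_pmf {1..d} False (\<lambda>_. bernoulli_pmf (1 / (?S + 1)))"
  let ?G = "\<lambda>j F. (\<lambda>k. if k \<in> {1..d} then
             (let B = (k = \<pi> j); Bt = (B \<noteq> F k) in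
               ((?S + 1) * of_bool Bt - 1) / (?S - 1) * ((w j - c) / m j) + c)
             else 0)"
  have fPi: "finite (set_pmf ?Pi)" by (rule finite_Pi_set) auto
  have "measure_pmf.expectation (wsm \<epsilon> w m c d \<pi>) (\<lambda>V. h (V k))
     = (\<Sum>j\<in>{1..d}. pmf (rank_pmf d m) j *\<^sub>R measure_pmf.expectation (map_pmf (?G j) ?Pi) (\<lambda>V. h (V k)))"
    unfolding wsm_def map_pmf_def
    by (rule pmf_expectation_bind) (use fPi set_rank[OF pv] in \<open>auto simp: set_bind_pmf\<close>)
  also have "\<dots> = (\<Sum>j=1..d. m j * measure_pmf.expectation (bernoulli_pmf (1 / (?S + 1)))
        (\<lambda>b. h (((?S + 1) * of_bool ((k = \<pi> j) \<noteq> b) - 1) / (?S - 1) * ((w j - c) / m j) + c)))"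
  proof (rule sum.cong[OF refl])
    fix j assume j: "j \<in> {1..d}"
    have "measure_pmf.expectation (map_pmf (?G j) ?Pi) (\<lambda>V. h (V k))
        = measure_pmf.expectation ?Pi (\<lambda>F. (\<lambda>b. h (((?S + 1) * of_bool ((k = \<pi> j) \<noteq> b) - 1) / (?S - 1) * ((w j - c) / m j) + c)) (F k))"
      using k by (simp add: Let_def)
    also have "\<dots> = measure_pmf.expectation (map_pmf (\<lambda>F. F k) ?Pi) (\<lambda>b. h (((?S + 1) * of_bool ((k = \<pi> j) \<noteq> b) - 1) / (?S - 1) * ((w j - c) / m j) + c))"
      by simp
    also have "\<dots> = measure_pmf.expectation (bernoulli_pmf (1 / (?S + 1))) (\<lambda>b. h (((?S + 1) * of_bool ((k = \<pi> j) \<noteq> b) - 1) / (?S - 1) * ((w j - c) / m j) + c))"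
      using k by (subst Pi_pmf_component) auto
    finally show "pmf (rank_pmf d m) j *\<^sub>R measure_pmf.expectation (map_pmf (?G j) ?Pi) (\<lambda>V. h (V k))
      = m j * measure_pmf.expectation (bernoulli_pmf (1 / (?S + 1))) (\<lambda>b. h (((?S + 1) * of_bool ((k = \<pi> j) \<noteq> b) - 1) / (?S - 1) * ((w j - c) / m j) + c))"
      using j by (simp add: pmf_rank[OF pv])
  qed
  finally show ?thesis .
qed

lemma bern_gen:
  fixes S :: real and f :: "bool \<Rightarrow> real"
  assumes "S > 1"
  shows "measure_pmf.expectation (bernoulli_pmf (1 / (S + 1))) f = (f True + S * f False) / (S + 1)"
proof -
  have q: "0 \<le> 1 / (S + 1)" "1 / (S + 1) \<le> 1" using assms by auto
  have ne: "S + 1 \<noteq> 0" using assms by auto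
  have "measure_pmf.expectation (bernoulli_pmf (1 / (S + 1))) f = f True * (1 / (S + 1)) + f False * (1 - 1 / (S + 1))"
    by (rule integral_bernoulli_pmf[OF q])
  also have "\<dots> = (f True + S * f False) / (S + 1)" using ne by (simp add: divide_simps)
  finally show ?thesis .
qed

lemma bern_lin:
  fixes S a c :: real
  assumes "S > 1"
  shows "measure_pmf.expectation (bernoulli_pmf (1 / (S + 1)))
        (\<lambda>b. ((S + 1) * of_bool (B \<noteq> b) - 1) / (S - 1) * a + c) = (if B then a else 0) + c"
proof -
  have ne: "S + 1 \<noteq> 0" "S - 1 \<noteq> 0" using assms by auto
  show ?thesis unfolding bern_gen[OF assms] using ne
    by (cases B) (simp_all add: divide_simps; simp add: algebra_simps power2_eq_square)+
qed

lemma bern_sq: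
  fixes S a c :: real
  assumes "S > 1"
  shows "measure_pmf.expectation (bernoulli_pmf (1 / (S + 1)))
        (\<lambda>b. (((S + 1) * of_bool (B \<noteq> b) - 1) / (S - 1) * a + c - c)\<^sup>2)
       = a\<^sup>2 * (if B then S\<^sup>2 - S + 1 else S) / (S - 1)\<^sup>2"
proof -
  have ne: "S + 1 \<noteq> 0" "S - 1 \<noteq> 0" using assms by auto
  show ?thesis unfolding bern_gen[OF assms] using ne
    by (cases B) (simp_all add: divide_simps; simp add: algebra_simps power2_eq_square)+
qed

lemma voter_mean:
  assumes e: "\<epsilon> > 0" and pv: "prob_vec d m" and mc: "\<forall>j\<in>{1..d}. 0 < m j \<or> w j = c"
    and p: "\<pi> permutes {1..d}" and k: "k \<in> {1..d}"
  shows "measure_pmf.expectation (wsm \<epsilon> w m c d \<pi>) (\<lambda>V. V k) = scored_vote w \<pi> k"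
proof -
  let ?S = "wsm_s \<epsilon>"
  have S1: "?S > 1" using e by (rule wsm_s_gt1)
  let ?j0 = "inv \<pi> k"
  have j0: "?j0 \<in> {1..d}" using permutes_in_image[OF permutes_inv[OF p]] k by blast
  have eq: "\<And>j. (k = \<pi> j) = (j = ?j0)" using p by (metis permutes_inv_eq)
  have "measure_pmf.expectation (wsm \<epsilon> w m c d \<pi>) (\<lambda>V. V k)
    = (\<Sum>j=1..d. m j * measure_pmf.expectation (bernoulli_pmf (1 / (?S + 1)))
        (\<lambda>b. ((?S + 1) * of_bool ((k = \<pi> j) \<noteq> b) - 1) / (?S - 1) * ((w j - c) / m j) + c))"
    by (rule wsm_expect[OF pv k, where h = "\<lambda>x. x"])
  also have "\<dots> = (\<Sum>j=1..d. m j * ((if k = \<pi> j then (w j - c) / m j else 0) + c))"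
    by (simp only: bern_lin[OF S1])
  also have "\<dots> = (\<Sum>j=1..d. (if j = ?j0 then m j * ((w j - c) / m j) else 0)) + c * (\<Sum>j=1..d. m j)"
  proof -
    have "\<And>j. m j * ((if k = \<pi> j then (w j - c) / m j else 0) + c)
       = (if j = ?j0 then m j * ((w j - c) / m j) else 0) + c * m j"
      by (simp only: eq) (simp add: algebra_simps)
    then show ?thesis by (simp only: sum.distrib sum_distrib_left)
  qed
  also have "\<dots> = m ?j0 * ((w ?j0 - c) / m ?j0) + c"
    using j0 pv by (simp add: prob_vec_def)
  also have "\<dots> = w ?j0"
    using mc j0 by force
  finally show ?thesis by (simp add: scored_vote_def)
qed

lemma voter_sq:
  assumes e: "\<epsilon> > 0" and pv: "prob_vec d m" and k: "k \<in> {1..d}"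
  shows "measure_pmf.expectation (wsm \<epsilon> w m c d \<pi>) (\<lambda>V. (V k - c)\<^sup>2)
     = (\<Sum>j=1..d. (w j - c)\<^sup>2 / m j * (if k = \<pi> j then (wsm_s \<epsilon>)\<^sup>2 - wsm_s \<epsilon> + 1 else wsm_s \<epsilon>) / (wsm_s \<epsilon> - 1)\<^sup>2)"
proof -
  let ?S = "wsm_s \<epsilon>"
  have S1: "?S > 1" using e by (rule wsm_s_gt1)
  have "measure_pmf.expectation (wsm \<epsilon> w m c d \<pi>) (\<lambda>V. (V k - c)\<^sup>2)
    = (\<Sum>j=1..d. m j * measure_pmf.expectation (bernoulli_pmf (1 / (?S + 1)))
        (\<lambda>b. (((?S + 1) * of_bool ((k = \<pi> j) \<noteq> b) - 1) / (?S - 1) * ((w j - c) / m j) + c - c)\<^sup>2))"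
    by (rule wsm_expect[OF pv k, where h = "\<lambda>x. (x - c)\<^sup>2"])
  also have "\<dots> = (\<Sum>j=1..d. m j * (((w j - c) / m j)\<^sup>2 * (if k = \<pi> j then ?S\<^sup>2 - ?S + 1 else ?S) / (?S - 1)\<^sup>2))"
    by (simp only: bern_sq[OF S1])
  also have "\<dots> = (\<Sum>j=1..d. (w j - c)\<^sup>2 / m j * (if k = \<pi> j then ?S\<^sup>2 - ?S + 1 else ?S) / (?S - 1)\<^sup>2)"
  proof (rule sum.cong[OF refl])
    fix j
    show "m j * (((w j - c) / m j)\<^sup>2 * (if k = \<pi> j then ?S\<^sup>2 - ?S + 1 else ?S) / (?S - 1)\<^sup>2)
        = (w j - c)\<^sup>2 / m j * (if k = \<pi> j then ?S\<^sup>2 - ?S + 1 else ?S) / (?S - 1)\<^sup>2"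
      by (cases "m j = 0") (simp_all add: power_divide power2_eq_square)
  qed
  finally show ?thesis .
qed

lemma sum_if_eq:
  fixes A B :: real
  assumes "x \<in> {1..d::nat}"
  shows "(\<Sum>k=1..d. if k = x then A else B) = (A - B) + real d * B"
proof -
  have "(\<Sum>k=1..d. if k = x then A else B) = (\<Sum>k=1..d. (if k = x then A - B else 0) + B)"
    by (rule sum.cong) auto
  also have "\<dots> = (A - B) + real d * B"
    using assms by (simp add: sum.distrib)
  finally show ?thesis .
qed

lemma voter_err:
  assumes e: "\<epsilon> > 0" and pv: "prob_vec d m" and mc: "\<forall>j\<in>{1..d}. 0 < m j \<or> w j = c"
    and p: "\<pi> permutes {1..d}"
  shows "measure_pmf.expectation (wsm \<epsilon> w m c d \<pi>) (\<lambda>V. \<Sum>k=1..d. (V k - scored_vote w \<pi> k)\<^sup>2)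
     \<le> (1 + real d * wsm_s \<epsilon> / (wsm_s \<epsilon> - 1)\<^sup>2) * (\<Sum>j=1..d. (w j - c)\<^sup>2 / m j)"
proof -
  let ?S = "wsm_s \<epsilon>"
  let ?X = "wsm \<epsilon> w m c d \<pi>"
  let ?v = "scored_vote w \<pi>"
  have S1: "?S > 1" using e by (rule wsm_s_gt1)
  have int: "\<And>g::(nat \<Rightarrow> real) \<Rightarrow> real. integrable (measure_pmf ?X) g"
    using finite_wsm[OF pv] by (simp add: integrable_measure_pmf_finite)
  have "measure_pmf.expectation ?X (\<lambda>V. \<Sum>k=1..d. (V k - ?v k)\<^sup>2)
      = (\<Sum>k=1..d. measure_pmf.expectation ?X (\<lambda>V. (V k - ?v k)\<^sup>2))"
    by (simp add: integral_sum int)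
  also have "\<dots> \<le> (\<Sum>k=1..d. measure_pmf.expectation ?X (\<lambda>V. (V k - c)\<^sup>2))"
  proof (rule sum_mono)
    fix k assume k: "k \<in> {1..d}"
    have fe: "(\<lambda>V. (V k - ?v k)\<^sup>2) = (\<lambda>V. (V k - c)\<^sup>2 + (2 * (c - ?v k)) * V k + ((?v k)\<^sup>2 - c\<^sup>2))"
      by (rule ext) (simp add: power2_eq_square algebra_simps)
    have "measure_pmf.expectation ?X (\<lambda>V. (V k - ?v k)\<^sup>2)
        = measure_pmf.expectation ?X (\<lambda>V. (V k - c)\<^sup>2) + (2 * (c - ?v k)) * measure_pmf.expectation ?X (\<lambda>V. V k) + ((?v k)\<^sup>2 - c\<^sup>2)"
      unfolding fe by (simp add: int)
    also have "\<dots> = measure_pmf.expectation ?X (\<lambda>V. (V k - c)\<^sup>2) - (?v k - c)\<^sup>2"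
      using voter_mean[OF e pv mc p k] by (simp add: power2_eq_square algebra_simps)
    finally show "measure_pmf.expectation ?X (\<lambda>V. (V k - ?v k)\<^sup>2) \<le> measure_pmf.expectation ?X (\<lambda>V. (V k - c)\<^sup>2)"
      by simp
  qed
  also have "\<dots> = (\<Sum>k=1..d. \<Sum>j=1..d. (w j - c)\<^sup>2 / m j * (if k = \<pi> j then ?S\<^sup>2 - ?S + 1 else ?S) / (?S - 1)\<^sup>2)"
    by (rule sum.cong[OF refl]) (rule voter_sq[OF e pv])
  also have "\<dots> = (\<Sum>j=1..d. \<Sum>k=1..d. (w j - c)\<^sup>2 / m j * (if k = \<pi> j then ?S\<^sup>2 - ?S + 1 else ?S) / (?S - 1)\<^sup>2)"
    by (rule sum.swap)
  also have "\<dots> = (\<Sum>j=1..d. (1 + real d * ?S / (?S - 1)\<^sup>2) * ((w j - c)\<^sup>2 / m j))"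
  proof (rule sum.cong[OF refl])
    fix j assume j: "j \<in> {1..d}"
    have pj: "\<pi> j \<in> {1..d}" using permutes_in_image[OF p] j by blast
    have "(\<Sum>k=1..d. (w j - c)\<^sup>2 / m j * (if k = \<pi> j then ?S\<^sup>2 - ?S + 1 else ?S) / (?S - 1)\<^sup>2)
        = (w j - c)\<^sup>2 / m j / (?S - 1)\<^sup>2 * (\<Sum>k=1..d. (if k = \<pi> j then ?S\<^sup>2 - ?S + 1 else ?S))"
      by (simp add: sum_distrib_left)
    also have "\<dots> = (w j - c)\<^sup>2 / m j / (?S - 1)\<^sup>2 * ((?S - 1)\<^sup>2 + real d * ?S)"
      unfolding sum_if_eq[OF pj] by (simp add: power2_eq_square algebra_simps)
    also have "\<dots> = (1 + real d * ?S / (?S - 1)\<^sup>2) * ((w j - c)\<^sup>2 / m j)"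
      using S1 by (simp add: field_simps)
    finally show "(\<Sum>k=1..d. (w j - c)\<^sup>2 / m j * (if k = \<pi> j then ?S\<^sup>2 - ?S + 1 else ?S) / (?S - 1)\<^sup>2)
        = (1 + real d * ?S / (?S - 1)\<^sup>2) * ((w j - c)\<^sup>2 / m j)" .
  qed
  also have "\<dots> = (1 + real d * ?S / (?S - 1)\<^sup>2) * (\<Sum>j=1..d. (w j - c)\<^sup>2 / m j)"
    by (simp add: sum_distrib_left)
  finally show ?thesis .
qed

lemma err_bound:
  assumes e: "\<epsilon> > 0" and n: "n \<ge> 1" and pv: "prob_vec d m" and mc: "\<forall>j\<in>{1..d}. 0 < m j \<or> w j = c"
    and p: "\<And>i. i \<in> {1..n} \<Longrightarrow> P i permutes {1..d}"
  shows "err_MSE \<epsilon> w d n P m c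
     \<le> (1 / real n) * (1 + real d * wsm_s \<epsilon> / (wsm_s \<epsilon> - 1)\<^sup>2) * (\<Sum>j=1..d. (w j - c)\<^sup>2 / m j)"
proof -
  let ?C = "(1 + real d * wsm_s \<epsilon> / (wsm_s \<epsilon> - 1)\<^sup>2) * (\<Sum>j=1..d. (w j - c)\<^sup>2 / m j)"
  define X where "X = (\<lambda>i. wsm \<epsilon> w m c d (P i))"
  define v where "v = (\<lambda>i k. scored_vote w (P i) k)"
  let ?Q = "Pi_pmf {1..n} (\<lambda>_. 0) X"
  have finX: "\<And>i. finite (set_pmf (X i))" unfolding X_def by (rule finite_wsm[OF pv])
  have intX: "\<And>i (g::(nat \<Rightarrow> real) \<Rightarrow> real). integrable (measure_pmf (X i)) g"
    using finX by (simp add: integrable_measure_pmf_finite)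
  have fQ: "finite (set_pmf ?Q)" by (intro finite_Pi_set finX) auto
  have intQ: "\<And>g::(nat \<Rightarrow> nat \<Rightarrow> real) \<Rightarrow> real. integrable (measure_pmf ?Q) g"
    using fQ by (simp add: integrable_measure_pmf_finite)
  have fe: "\<And>V. (\<Sum>k=1..d. ((1 / real n) * (\<Sum>i=1..n. V i k) - (1 / real n) * (\<Sum>i=1..n. v i k))\<^sup>2)
      = (\<Sum>k=1..d. (1 / real n)\<^sup>2 * (\<Sum>i\<in>{1..n}. (\<lambda>U. U k - v i k) (V i))\<^sup>2)"
  proof -
    fix V :: "nat \<Rightarrow> nat \<Rightarrow> real"
    have "\<And>k. (1 / real n) * (\<Sum>i=1..n. V i k) - (1 / real n) * (\<Sum>i=1..n. v i k)
        = (1 / real n) * (\<Sum>i\<in>{1..n}. (\<lambda>U. U k - v i k) (V i))"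
      by (simp only: right_diff_distrib[symmetric] sum_subtractf)
    then show "?thesis V" by (simp only: power_mult_distrib)
  qed
  have "err_MSE \<epsilon> w d n P m c = measure_pmf.expectation ?Q
      (\<lambda>V. \<Sum>k=1..d. (1 / real n)\<^sup>2 * (\<Sum>i\<in>{1..n}. (\<lambda>U. U k - v i k) (V i))\<^sup>2)"
    unfolding err_MSE_def X_def[symmetric] using fe by (simp add: v_def)
  also have "\<dots> = (\<Sum>k=1..d. (1 / real n)\<^sup>2 * measure_pmf.expectation ?Q
      (\<lambda>V. (\<Sum>i\<in>{1..n}. (\<lambda>U. U k - v i k) (V i))\<^sup>2))"
    by (subst Bochner_Integration.integral_sum[OF intQ]) simp
  also have "\<dots> = (\<Sum>k=1..d. (1 / real n)\<^sup>2 * (\<Sum>i\<in>{1..n}. measure_pmf.expectation (X i) (\<lambda>U. (U k - v i k)\<^sup>2)))"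
  proof (rule sum.cong[OF refl])
    fix k assume k: "k \<in> {1..d}"
    have "measure_pmf.expectation ?Q (\<lambda>V. (\<Sum>i\<in>{1..n}. (\<lambda>U. U k - v i k) (V i))\<^sup>2)
       = (\<Sum>i\<in>{1..n}. measure_pmf.expectation (X i) (\<lambda>x. ((\<lambda>U. U k - v i k) x)\<^sup>2))"
    proof (rule var_indep)
      fix i assume i: "i \<in> {1..n}"
      have "measure_pmf.expectation (X i) (\<lambda>U. U k - v i k) = measure_pmf.expectation (X i) (\<lambda>U. U k) - v i k"
        by (simp add: intX)
      also have "\<dots> = 0"
        unfolding X_def v_def using voter_mean[OF e pv mc p[OF i] k] by simp
      finally show "measure_pmf.expectation (X i) (\<lambda>U. U k - v i k) = 0" .
    qed (auto simp: finX)
    then show "(1 / real n)\<^sup>2 * measure_pmf.expectation ?Q (\<lambda>V. (\<Sum>i\<in>{1..n}. (\<lambda>U. U k - v i k) (V i))\<^sup>2)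
      = (1 / real n)\<^sup>2 * (\<Sum>i\<in>{1..n}. measure_pmf.expectation (X i) (\<lambda>U. (U k - v i k)\<^sup>2))" by simp
  qed
  also have "\<dots> = (1 / real n)\<^sup>2 * (\<Sum>i\<in>{1..n}. measure_pmf.expectation (X i) (\<lambda>U. \<Sum>k=1..d. (U k - v i k)\<^sup>2))"
    by (simp add: Bochner_Integration.integral_sum intX sum_distrib_left[symmetric]) (rule disjI2, rule sum.swap)
  also have "\<dots> \<le> (1 / real n)\<^sup>2 * (\<Sum>i\<in>{1..n}. ?C)"
  proof (rule mult_left_mono[OF sum_mono])
    fix i assume i: "i \<in> {1..n}"
    show "measure_pmf.expectation (X i) (\<lambda>U. \<Sum>k=1..d. (U k - v i k)\<^sup>2) \<le> ?C"
      unfolding X_def v_def by (rule voter_err[OF e pv mc p[OF i]])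
  qed simp
  also have "\<dots> = (1 / real n) * ?C"
    using n by (simp add: power2_eq_square)
  finally show ?thesis by (simp add: mult.assoc)
qed

theorem theorem5p4:
  fixes \<epsilon> :: real and n d :: nat and w :: "nat \<Rightarrow> real" and P :: "nat \<Rightarrow> nat \<Rightarrow> nat"
  assumes "\<epsilon> > 0" and "n \<ge> 1" and "d \<ge> 1"
    and "\<And>i j. 1 \<le> i \<Longrightarrow> i \<le> j \<Longrightarrow> j \<le> d \<Longrightarrow> w j \<le> w i"
    and "\<And>i. i \<in> {1..n} \<Longrightarrow> P i permutes {1..d}"
  defines "s \<equiv> sqrt (exp \<epsilon>)"
  defines "cs \<equiv> w (nat \<lceil>real d / 2\<rceil>)"
  defines "bound \<equiv> (1 / real n) * (1 + real d * s / (s - 1)\<^sup>2) * (\<Sum>j=1..d. \<bar>w j - cs\<bar>)\<^sup>2"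
  shows "(\<exists>m c. prob_vec d m \<and> err_MSE \<epsilon> w d n P m c \<le> bound)
       \<and> ((\<exists>i\<in>{1..d}. \<exists>j\<in>{1..d}. w i \<noteq> w j) \<longrightarrow>
            err_MSE \<epsilon> w d n P (\<lambda>j. \<bar>w j - cs\<bar> / (\<Sum>i=1..d. \<bar>w i - cs\<bar>)) cs \<le> bound)"
proof -
  note e = assms(1) and n = assms(2) and d = assms(3) and p = assms(5)
  have sdef: "s = wsm_s \<epsilon>" unfolding s_def wsm_s_def ..
  define S where "S = (\<Sum>j=1..d. \<bar>w j - cs\<bar>)"
  define K where "K = 1 + real d * s / (s - 1)\<^sup>2"
  have bd: "bound = (1 / real n) * K * S\<^sup>2" unfolding bound_def K_def S_def ..
  have ci: "nat \<lceil>real d / 2\<rceil> \<in> {1..d}"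
  proof -
    have h1: "\<lceil>real d / 2\<rceil> \<ge> 1" using d by (simp add: one_le_ceiling)
    have h2: "\<lceil>real d / 2\<rceil> \<le> int d" by (simp add: ceiling_le_iff)
    have "1 \<le> nat \<lceil>real d / 2\<rceil>" "nat \<lceil>real d / 2\<rceil> \<le> d" using h1 h2 by arith+
    then show ?thesis by simp
  qed
  have part2: "err_MSE \<epsilon> w d n P (\<lambda>j. \<bar>w j - cs\<bar> / S) cs \<le> bound"
    if nc: "\<exists>i\<in>{1..d}. \<exists>j\<in>{1..d}. w i \<noteq> w j"
  proof -
    obtain j0 where j0: "j0 \<in> {1..d}" "w j0 \<noteq> cs" using nc by metis
    have Spos: "S > 0" unfolding S_def
      by (rule sum_pos2[OF _ j0(1)]) (use j0 in auto)
    let ?m = "\<lambda>j. \<bar>w j - cs\<bar> / S"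
    have pv: "prob_vec d ?m" unfolding prob_vec_def sum_divide_distrib[symmetric] S_def[symmetric]
      using Spos by auto
    have mc: "\<forall>j\<in>{1..d}. 0 < ?m j \<or> w j = cs" using Spos by auto
    have "err_MSE \<epsilon> w d n P ?m cs \<le> (1 / real n) * K * (\<Sum>j=1..d. (w j - cs)\<^sup>2 / ?m j)"
      using err_bound[OF e n pv mc p] by (simp add: K_def sdef)
    also have "(\<Sum>j=1..d. (w j - cs)\<^sup>2 / ?m j) = (\<Sum>j=1..d. \<bar>w j - cs\<bar> * S)"
    proof (rule sum.cong[OF refl])
      fix j
      have hx: "(w j - cs)\<^sup>2 = \<bar>w j - cs\<bar> * \<bar>w j - cs\<bar>" by (simp add: power2_eq_square)
      show "(w j - cs)\<^sup>2 / ?m j = \<bar>w j - cs\<bar> * S"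
      proof (cases "w j = cs")
        case False
        then have "\<bar>w j - cs\<bar> \<noteq> 0" by simp
        then show ?thesis unfolding hx using Spos by (simp add: field_simps)
      qed simp
    qed
    also have "\<dots> = S\<^sup>2" by (simp add: sum_distrib_right[symmetric] S_def power2_eq_square)
    finally show ?thesis by (simp add: bd)
  qed
  show ?thesis
  proof
    show "\<exists>m c. prob_vec d m \<and> err_MSE \<epsilon> w d n P m c \<le> bound"
    proof (cases "\<exists>i\<in>{1..d}. \<exists>j\<in>{1..d}. w i \<noteq> w j")
      case True
      have "prob_vec d (\<lambda>j. \<bar>w j - cs\<bar> / S)"
      proof -
        obtain j0 where j0: "j0 \<in> {1..d}" "w j0 \<noteq> cs" using True by metis
        have Spos: "S > 0" unfolding S_def
          by (rule sum_pos2[OF _ j0(1)]) (use j0 in auto)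
        then show ?thesis unfolding prob_vec_def sum_divide_distrib[symmetric] S_def[symmetric]
          by auto
      qed
      then show ?thesis using part2[OF True] by blast
    next
      case False
      then have wc: "\<And>j. j \<in> {1..d} \<Longrightarrow> w j = cs" using ci unfolding cs_def by blast
      let ?m = "\<lambda>j::nat. 1 / real d"
      have pv: "prob_vec d ?m" unfolding prob_vec_def using d by auto
      have mc: "\<forall>j\<in>{1..d}. 0 < ?m j \<or> w j = cs" using wc by auto
      have "err_MSE \<epsilon> w d n P ?m cs \<le> (1 / real n) * K * (\<Sum>j=1..d. (w j - cs)\<^sup>2 / ?m j)"
        using err_bound[OF e n pv mc p] by (simp add: K_def sdef)
      also have "\<dots> = 0" using wc by simp
      also have "0 = bound" unfolding bd S_def using wc by simp
      finally show ?thesis using pv by blast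
    qed
  next
    show "(\<exists>i\<in>{1..d}. \<exists>j\<in>{1..d}. w i \<noteq> w j) \<longrightarrow>
            err_MSE \<epsilon> w d n P (\<lambda>j. \<bar>w j - cs\<bar> / (\<Sum>i=1..d. \<bar>w i - cs\<bar>)) cs \<le> bound"
      using part2 unfolding S_def by blast
  qed
qed

end
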